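(* If a regular WCF-end of a flat front is cylindrical, then $q_{-2}>0$ and $\mathrm{ord}_0|\omega|^2=\mathrm{ord}_0|\theta|^2=-1$.
   Context: Flat front on $D^*=\{0<|z|<1\}$: $f=\mathcal{E}\mathcal{E}^*$ into $H^3=\{uu^*:u\in SL(2,\mathbb{C})\}$, $\mathcal{E}$ a holomorphic immersion of the universal cover into $SL(2,\mathbb{C})$ with $\mathcal{E}^{-1}d\mathcal{E}=\begin{pmatrix}0&\theta\\ \omega&0\end{pmatrix}$; $z$ compatible with $ds^2_{1,1}=|\omega|^2+|\theta|^2$; hyperbolic Gauss maps $G=E_{11}/E_{21}$, $G_*=E_{12}/E_{22}$; Hopf differential $Q=\omega\theta$. WCF-end: $ds^2_{1,1}$ complete at $0$ with finite total curvature near $0$; regular: $G,G_*$ have at most poles at $0$. Writing $\omega=z^\mu\omega_1dz$, $\theta=z^{\mu_*}\theta_1dz$ with $\omega_1,\theta_1$ holomorphic and non-zero at $0$, $\mathrm{ord}_0|\omega|^2=\mu$, $\mathrm{ord}_0|\theta|^2=\mu_*$. For a regular WCF-end, $Q=z^{-2}(q_{-2}+o(1))dz^2$ ($q_{-2}$ the top-term coefficient); the end is cylindrical if $\mathrm{ord}_0|\omega|^2=\mathrm{ord}_0|\theta|^2$. *)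

theory Defs
  imports "HOL-Complex_Analysis.Complex_Analysis"
begin

text \<open>The punctured unit disk D* = {0 < |z| < 1} and its universal cover,
  the left half plane {Re w < 0}, with covering map z = exp w.
  The inverse branch used to push single-valued quantities down to D* is Ln.\<close>

definition punct_disk :: "complex set" where
  "punct_disk = {z. 0 < cmod z \<and> cmod z < 1}"

definition left_half_plane :: "complex set" where
  "left_half_plane = {w. Re w < 0}"

definition mderiv :: "(complex \<Rightarrow> complex^2^2) \<Rightarrow> complex \<Rightarrow> complex^2^2" where
  "mderiv E w = (\<chi> i j. deriv (\<lambda>u. E u $ i $ j) w)"

definition offdiag :: "complex \<Rightarrow> complex \<Rightarrow> complex^2^2" where
  "offdiag a b = (\<chi> i j. if i = 1 \<and> j = 2 then a else if i = 2 \<and> j = 1 then b else 0)"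

definition cstar :: "complex^2^2 \<Rightarrow> complex^2^2" where
  "cstar A = (\<chi> i j. cnj (A $ j $ i))"

text \<open>Flat front on D*: E holomorphic immersion of the universal cover into SL(2,C),
  E^{-1} dE = [[0, theta],[omega, 0]] (omega = om w dw, theta = th w dw),
  and f = E E^* single valued on D* (invariant under the deck transformation w -> w + 2 pi i).\<close>
definition flat_front :: "(complex \<Rightarrow> complex^2^2) \<Rightarrow> (complex \<Rightarrow> complex) \<Rightarrow> (complex \<Rightarrow> complex) \<Rightarrow> bool" where
  "flat_front E om th \<longleftrightarrow>
     (\<forall>i j. (\<lambda>w. E w $ i $ j) holomorphic_on left_half_plane) \<and>
     om holomorphic_on left_half_plane \<and> th holomorphic_on left_half_plane \<and>
     (\<forall>w\<in>left_half_plane. det (E w) = 1) \<and>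
     (\<forall>w\<in>left_half_plane. mderiv E w \<noteq> 0) \<and>
     (\<forall>w\<in>left_half_plane. matrix_inv (E w) ** mderiv E w = offdiag (th w) (om w)) \<and>
     (\<forall>w\<in>left_half_plane.
        E (w + 2 * pi * \<i>) ** cstar (E (w + 2 * pi * \<i>)) = E w ** cstar (E w))"

text \<open>Coefficient of |omega|^2 with respect to |dz|^2 on D*: omega = om(w) dw = om(Ln z)/z dz.\<close>
definition metric_coeff :: "(complex \<Rightarrow> complex) \<Rightarrow> complex \<Rightarrow> real" where
  "metric_coeff om z = (cmod (om (Ln z)))\<^sup>2 / (cmod z)\<^sup>2"

text \<open>Conformal factor rho of ds^2_{1,1} = |omega|^2 + |theta|^2 = rho^2 |dz|^2.\<close>
definition rho11 :: "(complex \<Rightarrow> complex) \<Rightarrow> (complex \<Rightarrow> complex) \<Rightarrow> complex \<Rightarrow> real" where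
  "rho11 om th z = sqrt (metric_coeff om z + metric_coeff th z)"

definition lapl :: "(complex \<Rightarrow> real) \<Rightarrow> complex \<Rightarrow> real" where
  "lapl u z = deriv (deriv (\<lambda>t::real. u (z + complex_of_real t))) 0
            + deriv (deriv (\<lambda>t::real. u (z + \<i> * complex_of_real t))) 0"

definition curv11 :: "(complex \<Rightarrow> complex) \<Rightarrow> (complex \<Rightarrow> complex) \<Rightarrow> complex \<Rightarrow> real" where
  "curv11 om th z = - lapl (\<lambda>x. ln (rho11 om th x)) z / (rho11 om th z)\<^sup>2"

definition complete_at_0 :: "(complex \<Rightarrow> complex) \<Rightarrow> (complex \<Rightarrow> complex) \<Rightarrow> bool" where
  "complete_at_0 om th \<longleftrightarrow>
     (\<forall>\<gamma>::real \<Rightarrow> complex.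
        \<gamma> C1_differentiable_on {0..<1} \<and> (\<forall>t\<in>{0..<1}. \<gamma> t \<in> punct_disk) \<and>
        (\<gamma> \<longlongrightarrow> 0) (at_left 1) \<longrightarrow>
        \<not> (\<lambda>t. rho11 om th (\<gamma> t) * norm (vector_derivative \<gamma> (at t))) integrable_on {0..<1})"

definition finite_total_curvature_at_0 :: "(complex \<Rightarrow> complex) \<Rightarrow> (complex \<Rightarrow> complex) \<Rightarrow> bool" where
  "finite_total_curvature_at_0 om th \<longleftrightarrow>
     (\<exists>r>0. r \<le> 1 \<and>
        (\<lambda>z. \<bar>curv11 om th z\<bar> * (rho11 om th z)\<^sup>2) integrable_on (ball 0 r - {0}))"

definition WCF_end :: "(complex \<Rightarrow> complex) \<Rightarrow> (complex \<Rightarrow> complex) \<Rightarrow> bool" where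
  "WCF_end om th \<longleftrightarrow> complete_at_0 om th \<and> finite_total_curvature_at_0 om th"

definition hypGauss :: "(complex \<Rightarrow> complex^2^2) \<Rightarrow> complex \<Rightarrow> complex" where
  "hypGauss E w = E w $ 1 $ 1 / E w $ 2 $ 1"

definition hypGauss_star :: "(complex \<Rightarrow> complex^2^2) \<Rightarrow> complex \<Rightarrow> complex" where
  "hypGauss_star E w = E w $ 1 $ 2 / E w $ 2 $ 2"

definition regular_end :: "(complex \<Rightarrow> complex^2^2) \<Rightarrow> bool" where
  "regular_end E \<longleftrightarrow>
     (\<lambda>z. hypGauss E (Ln z)) meromorphic_on {0} \<and>
     (\<lambda>z. hypGauss_star E (Ln z)) meromorphic_on {0}"

definition regular_WCF_end :: "(complex \<Rightarrow> complex^2^2) \<Rightarrow> (complex \<Rightarrow> complex) \<Rightarrow> (complex \<Rightarrow> complex) \<Rightarrow> bool" where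
  "regular_WCF_end E om th \<longleftrightarrow> WCF_end om th \<and> regular_end E"

text \<open>ord_0 of a metric coefficient: a = |z|^{2 mu} |phi|^2 near 0 with phi holomorphic, phi 0 \<noteq> 0
  (i.e. omega = z^mu omega_1 dz with omega_1 holomorphic and non-zero at 0).\<close>
definition has_ord0 :: "(complex \<Rightarrow> real) \<Rightarrow> real \<Rightarrow> bool" where
  "has_ord0 a \<mu> \<longleftrightarrow>
     (\<exists>r>0. \<exists>\<phi>. \<phi> holomorphic_on ball 0 r \<and> \<phi> 0 \<noteq> 0 \<and>
        (\<forall>z\<in>ball 0 r - {0}. a z = cmod z powr (2 * \<mu>) * (cmod (\<phi> z))\<^sup>2))"

definition cylindrical :: "(complex \<Rightarrow> complex) \<Rightarrow> (complex \<Rightarrow> complex) \<Rightarrow> bool" where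
  "cylindrical om th \<longleftrightarrow> (\<exists>\<mu>. has_ord0 (metric_coeff om) \<mu> \<and> has_ord0 (metric_coeff th) \<mu>)"

text \<open>Hopf differential Q = omega theta = hopf_coeff z dz^2 on D*.\<close>
definition hopf_coeff :: "(complex \<Rightarrow> complex) \<Rightarrow> (complex \<Rightarrow> complex) \<Rightarrow> complex \<Rightarrow> complex" where
  "hopf_coeff om th z = om (Ln z) * th (Ln z) / z\<^sup>2"

end

theory Submission
  imports Defs
begin


lemma mat2_mult_entry: "((A::complex^2^2) ** B) $ i $ j = A$i$1 * B$1$j + A$i$2 * B$2$j"
  by (simp add: matrix_matrix_mult_def sum_2)

lemma flat_front_ode:
  fixes E :: "complex \<Rightarrow> complex^2^2" and om th :: "complex \<Rightarrow> complex"
  assumes ff: "flat_front E om th" and w: "w \<in> left_half_plane"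
  shows "((\<lambda>u. E u $ 1 $ 1) has_field_derivative E w $ 1 $ 2 * om w) (at w)"
    and "((\<lambda>u. E u $ 2 $ 1) has_field_derivative E w $ 2 $ 2 * om w) (at w)"
    and "((\<lambda>u. E u $ 1 $ 2) has_field_derivative E w $ 1 $ 1 * th w) (at w)"
    and "((\<lambda>u. E u $ 2 $ 2) has_field_derivative E w $ 2 $ 1 * th w) (at w)"
    and "E w $ 1 $ 1 * E w $ 2 $ 2 - E w $ 1 $ 2 * E w $ 2 $ 1 = 1"
proof -
  have op: "open left_half_plane" unfolding left_half_plane_def
    by (simp add: open_halfspace_Re_lt)
  have hol: "\<And>i j. (\<lambda>w. E w $ i $ j) holomorphic_on left_half_plane"
    and det1: "det (E w) = 1"
    and rel: "matrix_inv (E w) ** mderiv E w = offdiag (th w) (om w)"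
    using ff w unfolding flat_front_def by auto
  have inv: "invertible (E w)" using det1 invertible_det_nz by force
  then have "E w ** matrix_inv (E w) = mat 1"
    unfolding matrix_inv_def invertible_def by (rule someI_ex[THEN conjunct1])
  hence M: "mderiv E w = E w ** offdiag (th w) (om w)"
    by (metis matrix_mul_assoc matrix_mul_lid rel)
  have D: "\<And>i j. ((\<lambda>u. E u $ i $ j) has_field_derivative mderiv E w $ i $ j) (at w)"
  proof -
    fix i j
    have "(\<lambda>w. E w $ i $ j) field_differentiable at w"
      using hol[of i j] op w holomorphic_on_imp_differentiable_at by blast
    thus "((\<lambda>u. E u $ i $ j) has_field_derivative mderiv E w $ i $ j) (at w)"
      unfolding mderiv_def by (simp add: field_differentiable_derivI)
  qed
  have o12: "offdiag a b $ 1 $ 2 = a" and o21: "offdiag a b $ 2 $ 1 = b"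
    and o11: "offdiag a b $ 1 $ 1 = 0" and o22: "offdiag a b $ 2 $ 2 = 0" for a b
    unfolding offdiag_def by simp_all
  show "((\<lambda>u. E u $ 1 $ 1) has_field_derivative E w $ 1 $ 2 * om w) (at w)"
    using D[of 1 1] by (simp add: M mat2_mult_entry o12 o21 o11 o22)
  show "((\<lambda>u. E u $ 2 $ 1) has_field_derivative E w $ 2 $ 2 * om w) (at w)"
    using D[of 2 1] by (simp add: M mat2_mult_entry o12 o21 o11 o22)
  show "((\<lambda>u. E u $ 1 $ 2) has_field_derivative E w $ 1 $ 1 * th w) (at w)"
    using D[of 1 2] by (simp add: M mat2_mult_entry o12 o21 o11 o22)
  show "((\<lambda>u. E u $ 2 $ 2) has_field_derivative E w $ 2 $ 1 * th w) (at w)"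
    using D[of 2 2] by (simp add: M mat2_mult_entry o12 o21 o11 o22)
  show "E w $ 1 $ 1 * E w $ 2 $ 2 - E w $ 1 $ 2 * E w $ 2 $ 1 = 1"
    using det1 by (simp add: det_2)
qed



lemma open_subset_sphere_empty:
  fixes T :: "complex set"
  assumes "open T" "T \<subseteq> sphere 0 1" shows "T = {}"
proof (rule ccontr)
  assume "T \<noteq> {}" then obtain y where y: "y \<in> T" by auto
  then obtain e where e: "e > 0" "ball y e \<subseteq> T" using assms(1) open_contains_ball by blast
  have ny: "cmod y = 1" using y assms(2) by auto
  define y' where "y' = y * of_real (1 + e/2)"
  have "dist y y' = e/2"
    using e by (simp add: y'_def dist_norm algebra_simps norm_mult ny)
  hence "y' \<in> T" using e by auto
  moreover have "cmod y' = 1 + e/2"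
  proof -
    have "cmod (of_real (1+e/2)::complex) = 1 + e/2" using e by (simp only: norm_of_real)
    thus ?thesis by (simp only: y'_def norm_mult ny) simp
  qed
  ultimately show False using assms(2) e by auto
qed

lemma rep_from_ord0:
  fixes om \<phi> :: "complex \<Rightarrow> complex" and \<mu> r :: real
  assumes hol: "om holomorphic_on left_half_plane" and r: "0 < r" "r \<le> 1"
    and phol: "\<phi> holomorphic_on ball 0 r" and nz: "\<forall>z\<in>ball 0 r. \<phi> z \<noteq> 0"
    and eq: "\<forall>z\<in>ball 0 r - {0}. metric_coeff om z = cmod z powr (2*\<mu>) * (cmod (\<phi> z))\<^sup>2"
  shows "\<exists>c. cmod c = 1 \<and> (\<forall>w. Re w < ln r \<longrightarrow> om w = c * exp (of_real (\<mu>+1) * w) * \<phi> (exp w))"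
proof -
  define D where "D = {w. Re w < ln r}"
  define S where "S = {w. Re w < ln r} \<inter> {w. Im w > -pi} \<inter> {w. Im w < pi}"
  define h where "h = (\<lambda>w. exp (of_real (\<mu>+1) * w) * \<phi> (exp w))"
  have oD: "open D" unfolding D_def by (rule open_halfspace_Re_lt)
  have cD: "connected D" unfolding D_def by (intro convex_connected convex_halfspace_Re_lt)
  have oS: "open S" unfolding S_def
    by (intro open_Int open_halfspace_Re_lt open_halfspace_Im_gt open_halfspace_Im_lt)
  have cS: "connected S" unfolding S_def
    by (intro convex_connected convex_Int convex_halfspace_Re_lt convex_halfspace_Im_gt convex_halfspace_Im_lt)
  have SD: "S \<subseteq> D" unfolding S_def D_def by auto
  have lnr: "ln r \<le> 0" using r by simp
  have DL: "D \<subseteq> left_half_plane" unfolding D_def left_half_plane_def using lnr by auto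
  have expD: "exp w \<in> ball 0 r" if "w \<in> D" for w
  proof -
    have "exp (Re w) < exp (ln r)" using that unfolding D_def by simp
    thus ?thesis using r by simp
  qed
  have hhol: "h holomorphic_on D" unfolding h_def
    by (intro holomorphic_intros holomorphic_on_compose_gen[OF _ phol, unfolded o_def]) (auto intro: expD)
  have hnz: "h w \<noteq> 0" if "w \<in> D" for w using nz expD[OF that] by (simp add: h_def)
  define k where "k = (\<lambda>w. om w / h w)"
  have khol: "k holomorphic_on D" unfolding k_def
    by (intro holomorphic_intros holomorphic_on_subset[OF hol DL] hhol) (use hnz in auto)
  have knorm: "cmod (k w) = 1" if "w \<in> S" for w
  proof -
    have wD: "w \<in> D" using that SD by auto
    have Ln: "Ln (exp w) = w" using that unfolding S_def by (intro Ln_exp) auto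
    have ez: "exp w \<in> ball 0 r - {0}" using expD[OF wD] by simp
    have ne: "cmod (exp w) = exp (Re w)" by simp
    have "metric_coeff om (exp w) = (cmod (om w))\<^sup>2 / (exp (Re w))\<^sup>2"
      unfolding metric_coeff_def Ln ne ..
    hence "(cmod (om w))\<^sup>2 / (exp (Re w))\<^sup>2 = exp (Re w) powr (2*\<mu>) * (cmod (\<phi> (exp w)))\<^sup>2"
      using eq ez ne by metis
    hence "(cmod (om w))\<^sup>2 = exp (Re w) powr (2*\<mu>) * (exp (Re w))\<^sup>2 * (cmod (\<phi> (exp w)))\<^sup>2"
      by (simp add: field_simps)
    also have "\<dots> = (exp ((\<mu>+1) * Re w) * cmod (\<phi> (exp w)))\<^sup>2"
      by (simp add: powr_def power2_eq_square algebra_simps flip: exp_add)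
    also have "exp ((\<mu>+1) * Re w) * cmod (\<phi> (exp w)) = cmod (h w)"
      by (simp add: h_def norm_mult)
    finally have "cmod (om w) = cmod (h w)"
      by (metis norm_ge_zero power2_eq_imp_eq)
    thus ?thesis using hnz[OF wD] by (simp add: k_def norm_divide)
  qed
  have "k constant_on S"
  proof (rule ccontr)
    assume nc: "\<not> k constant_on S"
    have "open (k ` S)"
      by (rule open_mapping_thm[OF holomorphic_on_subset[OF khol SD] oS cS oS order_refl nc])
    moreover have "k ` S \<subseteq> sphere 0 1" using knorm by auto
    ultimately have "k ` S = {}" by (rule open_subset_sphere_empty)
    moreover have "of_real (ln r - 1) \<in> S" unfolding S_def by auto
    ultimately show False by auto
  qed
  then obtain c where c: "\<And>w. w \<in> S \<Longrightarrow> k w = c" unfolding constant_on_def by blast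
  have w0S: "of_real (ln r - 1) \<in> S" unfolding S_def by auto
  have cn: "cmod c = 1" using knorm[OF w0S] c[OF w0S] by simp
  have "k w = c" if "w \<in> D" for w
    by (rule analytic_continuation_open[OF oS oD _ cD SD khol _ c that]) (use w0S in auto)
  hence "om w = c * h w" if "w \<in> D" for w
  proof -
    have "om w / h w = c" using that \<open>\<And>w. w \<in> D \<Longrightarrow> k w = c\<close> by (simp add: k_def)
    thus ?thesis using hnz[OF that] by (simp add: field_simps)
  qed
  thus ?thesis using cn unfolding D_def h_def by (auto simp: mult.assoc)
qed



lemma logderiv_tendsto:
  fixes f :: "complex \<Rightarrow> complex"
  assumes F: "f has_laurent_expansion F" and F0: "F \<noteq> 0"
  shows "((\<lambda>z. z * deriv f z / f z) \<longlongrightarrow> of_int (fls_subdegree F)) (at 0)"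
proof -
  define n where "n = fls_subdegree F"
  define c where "c = fls_nth F n"
  have c0: "c \<noteq> 0" using F0 by (simp add: c_def n_def)
  have dF: "deriv f has_laurent_expansion fls_deriv F" by (rule has_laurent_expansion_deriv[OF F])
  show ?thesis
  proof (cases "n = 0")
    case True
    have "f \<midarrow>0\<rightarrow> fls_nth F 0"
      by (rule has_laurent_expansion_imp_tendsto_0[OF F]) (use True n_def in simp)
    hence lf: "f \<midarrow>0\<rightarrow> c" using True by (simp add: c_def)
    have "deriv f \<midarrow>0\<rightarrow> fls_nth (fls_deriv F) 0"
      by (rule has_laurent_expansion_imp_tendsto_0[OF dF]) (use True n_def fls_deriv_subdegree0 in auto)
    then have "((\<lambda>z. z * deriv f z / f z) \<longlongrightarrow> 0 * fls_nth (fls_deriv F) 0 / c) (at 0)"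
      by (intro tendsto_intros lf c0) auto
    thus ?thesis using True by (simp add: n_def)
  next
    case False
    have sd: "fls_subdegree (fls_deriv F) = n - 1" using False by (simp add: n_def fls_subdegree_deriv)
    have nd: "fls_nth (fls_deriv F) (n - 1) = of_int n * c" by (simp add: c_def)
    have a1: "f \<sim>[at 0] (\<lambda>z. c * z powi n)"
      using has_laurent_expansion_imp_asymp_equiv_0[OF F] by (simp add: c_def n_def)
    have a2: "deriv f \<sim>[at 0] (\<lambda>z. (of_int n * c) * z powi (n - 1))"
      using has_laurent_expansion_imp_asymp_equiv_0[OF dF] by (simp add: sd nd c_def)
    have "(\<lambda>z. z * deriv f z / f z) \<sim>[at 0] (\<lambda>z. z * ((of_int n * c) * z powi (n - 1)) / (c * z powi n))"
      by (intro asymp_equiv_intros a1 a2)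
    also have "\<dots> \<sim>[at 0] (\<lambda>z. of_int n)"
    proof (rule asymp_equiv_refl_ev)
      have "eventually (\<lambda>z::complex. z \<noteq> 0) (at 0)" by (simp add: eventually_at_filter)
      thus "eventually (\<lambda>z. z * ((of_int n * c) * z powi (n - 1)) / (c * z powi n) = of_int n) (at 0)"
      proof eventually_elim
        case (elim z)
        have "z * z powi (n - 1) = z powi n"
          using elim by (metis diff_add_cancel power_int_add_1')
        thus ?case using elim c0 by (simp add: field_simps)
      qed
    qed
    finally have "(\<lambda>z. z * deriv f z / f z) \<sim>[at 0] (\<lambda>z. of_int n)" .
    from asymp_equiv_tendsto_transfer[OF asymp_equiv_symI[OF this]]
    show ?thesis by (simp add: n_def)
  qed
qed



lemma complete_imp_mu_le:
  fixes om th \<phi> \<psi> :: "complex \<Rightarrow> complex" and \<mu> r :: real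
  assumes comp: "complete_at_0 om th" and r: "0 < r" "r \<le> 1"
    and phc: "continuous_on (ball 0 r) \<phi>" and psc: "continuous_on (ball 0 r) \<psi>"
    and eq1: "\<forall>z\<in>ball 0 r - {0}. metric_coeff om z = cmod z powr (2*\<mu>) * (cmod (\<phi> z))\<^sup>2"
    and eq2: "\<forall>z\<in>ball 0 r - {0}. metric_coeff th z = cmod z powr (2*\<mu>) * (cmod (\<psi> z))\<^sup>2"
  shows "\<mu> \<le> -1"
proof (rule ccontr)
  assume "\<not> \<mu> \<le> -1" hence mu: "\<mu> > -1" by simp
  define p where "p = 1 / (\<mu> + 1)"
  have p: "p > 0" using mu by (simp add: p_def)
  define a where "a = r / 2"
  have a: "0 < a" "a < 1" "a < r" using r by (auto simp: a_def)
  define u where "u = (\<lambda>t::real. a * (1 - t) powr p)"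
  define \<gamma> where "\<gamma> = (\<lambda>t. complex_of_real (u t))"
  define D where "D = (\<lambda>t::real. complex_of_real (a * (p * (1 - t) powr (p - 1) * (-1))))"
  have uder: "(u has_real_derivative a * (p * (1 - t) powr (p - 1) * (-1))) (at t)" if "t < 1" for t
    unfolding u_def using that by (auto intro!: derivative_eq_intros)
  have gder: "(\<gamma> has_vector_derivative D t) (at t)" if "t < 1" for t
    unfolding \<gamma>_def D_def by (rule has_vector_derivative_of_real[OF uder[OF that]])
  have upos: "0 < u t" "u t \<le> a" if "0 \<le> t" "t < 1" for t
  proof -
    show "0 < u t" using that a by (simp add: u_def)
    have "(1 - t) powr p \<le> 1 powr p" using that p by (intro powr_mono2) auto
    hence "(1 - t) powr p \<le> 1" by simp
    thus "u t \<le> a" using a by (simp add: u_def mult_left_le)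
  qed
  have C1: "\<gamma> C1_differentiable_on {0..<1}"
    unfolding C1_differentiable_on_def
  proof (intro exI conjI ballI)
    show "(\<gamma> has_vector_derivative D t) (at t)" if "t \<in> {0..<1}" for t using gder that by auto
    show "continuous_on {0..<1} D" unfolding D_def
      by (intro continuous_intros) auto
  qed
  have inD: "\<gamma> t \<in> punct_disk" if "t \<in> {0..<1}" for t
    using upos[of t] that a by (auto simp: \<gamma>_def punct_disk_def)
  have lim: "(\<gamma> \<longlongrightarrow> 0) (at_left 1)"
  proof -
    have "((\<lambda>t. (1 - t) powr p) \<longlongrightarrow> 0) (at_left (1::real))"
      by (rule tendsto_zero_powrI) (auto intro!: tendsto_eq_intros p exI[of _ 0] simp: eventually_at_left_field)
    hence "(u \<longlongrightarrow> a * 0) (at_left 1)" unfolding u_def by (intro tendsto_intros)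
    hence "((\<lambda>t. complex_of_real (u t)) \<longlongrightarrow> of_real 0) (at_left 1)"
      by (intro tendsto_of_real) simp
    thus ?thesis by (simp add: \<gamma>_def)
  qed
  define K where "K = (\<lambda>t. a powr \<mu> * (a * p) *
      sqrt ((cmod (\<phi> (of_real (a * (1 - t) powr p))))\<^sup>2 + (cmod (\<psi> (of_real (a * (1 - t) powr p))))\<^sup>2))"
  have eqK: "rho11 om th (\<gamma> t) * norm (vector_derivative \<gamma> (at t)) = K t" if t: "t \<in> {0..<1}" for t
  proof -
    have t1: "0 \<le> t" "t < 1" using t by auto
    have ut: "0 < u t" "u t \<le> a" using upos t1 by auto
    have gin: "\<gamma> t \<in> ball 0 r - {0}" using ut a by (auto simp: \<gamma>_def)
    have ng: "cmod (\<gamma> t) = u t" using ut by (simp add: \<gamma>_def)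
    have vd: "vector_derivative \<gamma> (at t) = D t" by (rule vector_derivative_at[OF gder[OF t1(2)]])
    have nD: "norm (D t) = a * p * (1 - t) powr (p - 1)" using a p t1 by (simp add: D_def norm_mult)
    have "rho11 om th (\<gamma> t) = sqrt (u t powr (2*\<mu>) * ((cmod (\<phi> (\<gamma> t)))\<^sup>2 + (cmod (\<psi> (\<gamma> t)))\<^sup>2))"
      unfolding rho11_def using eq1 eq2 gin ng by (simp add: algebra_simps)
    also have "\<dots> = u t powr \<mu> * sqrt ((cmod (\<phi> (\<gamma> t)))\<^sup>2 + (cmod (\<psi> (\<gamma> t)))\<^sup>2)"
    proof -
      have "u t powr (2*\<mu>) = (u t powr \<mu>)\<^sup>2" using ut by (simp add: power2_eq_square flip: powr_add)
      thus ?thesis by (simp add: real_sqrt_mult)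
    qed
    finally have R: "rho11 om th (\<gamma> t) = u t powr \<mu> * sqrt ((cmod (\<phi> (\<gamma> t)))\<^sup>2 + (cmod (\<psi> (\<gamma> t)))\<^sup>2)" .
    have "u t powr \<mu> * (1 - t) powr (p - 1) = a powr \<mu>"
    proof -
      have "u t powr \<mu> = a powr \<mu> * (1 - t) powr (p * \<mu>)"
        using a t1 by (simp add: u_def powr_mult powr_powr)
      moreover have "p * \<mu> + (p - 1) = 0" using mu by (simp add: p_def field_simps)
      ultimately show ?thesis using t1 by (simp add: mult.assoc flip: powr_add)
    qed
    thus ?thesis
      unfolding R vd nD K_def by (simp add: \<gamma>_def u_def algebra_simps)
  qed
  have Kcont: "continuous_on {0..1} K"
  proof -
    have c1: "continuous_on {0..1} (\<lambda>t::real. a * (1 - t) powr p)"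
      by (intro continuous_intros continuous_on_powr') (use p in auto)
    have sub: "(\<lambda>t. complex_of_real (a * (1 - t) powr p)) ` {0..1} \<subseteq> ball 0 r"
    proof clarify
      fix t :: real assume "t \<in> {0..1}"
      hence "(1 - t) powr p \<le> 1 powr p" using p by (intro powr_mono2) auto
      hence "(1 - t) powr p \<le> 1" "0 \<le> (1-t) powr p" by auto
      hence "a * (1 - t) powr p < r" using a by (smt (verit) mult_left_le)
      thus "complex_of_real (a * (1 - t) powr p) \<in> ball 0 r" using a \<open>0 \<le> (1-t) powr p\<close>
        by (simp only: mem_ball dist_0_norm norm_of_real) simp
    qed
    have c2: "continuous_on {0..1} (\<lambda>t. complex_of_real (a * (1 - t) powr p))"
      by (intro continuous_on_of_real c1)
    have "continuous_on {0..1} (\<lambda>t. \<phi> (complex_of_real (a * (1 - t) powr p)))"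
      by (rule continuous_on_compose2[OF phc c2 sub])
    moreover have "continuous_on {0..1} (\<lambda>t. \<psi> (complex_of_real (a * (1 - t) powr p)))"
      by (rule continuous_on_compose2[OF psc c2 sub])
    ultimately show ?thesis unfolding K_def by (intro continuous_intros)
  qed
  have "K integrable_on {0..1}" by (rule integrable_continuous_real[OF Kcont])
  moreover have negl: "negligible (({0..1} - {0..<1}) \<union> ({0..<1} - {0..(1::real)}))"
  proof -
    have eq: "({0..1} - {0..<1}) \<union> ({0..<1} - {0..(1::real)}) = {1}" by auto
    show ?thesis unfolding eq by (rule negligible_sing)
  qed
  ultimately have "K integrable_on {0..<1}" using integrable_spike_set_eq[OF negl, of K] by blast
  hence I: "(\<lambda>t. rho11 om th (\<gamma> t) * norm (vector_derivative \<gamma> (at t))) integrable_on {0..<1}"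
    by (subst integrable_cong[of "{0..<1}" _ K]) (use eqK in auto)
  have "\<gamma> C1_differentiable_on {0..<1} \<and> (\<forall>t\<in>{0..<1}. \<gamma> t \<in> punct_disk) \<and> (\<gamma> \<longlongrightarrow> 0) (at_left 1) \<longrightarrow>
        \<not> (\<lambda>t. rho11 om th (\<gamma> t) * norm (vector_derivative \<gamma> (at t))) integrable_on {0..<1}"
    using comp unfolding complete_at_0_def by (rule spec)
  with C1 inD lim I show False by auto
qed



lemma algI:
  fixes a b vo vo' x G1 G2 dlt c e p0 p1 s :: complex
  assumes nz: "a \<noteq> 0" "b \<noteq> 0" "x \<noteq> 0" "p0 \<noteq> 0" "c \<noteq> 0" "e \<noteq> 0"
    and ho: "vo = c * e * p0" and ho': "vo' = c * (s * e * p0 + e * (p1 * x))"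
    and h1: "- vo / a^2 = x * G1"
    and h2: "(- vo' * a^2 - - vo * (2 * a * (b * vo))) / (a^2 * a^2) = x * G1 + x * (G2 * x)"
    and hd: "dlt = 1 / (a * b)"
  shows "2 * (x * G1 / dlt) = 1 + x * G2 / G1 - s - x * p1 / p0"
proof -
  have o0: "vo \<noteq> 0" using ho nz by simp
  have G1: "G1 = - vo / (a^2 * x)" using h1 nz by (simp add: field_simps)
  have G2: "G2 = ((- vo' * a^2 - - vo * (2 * a * (b * vo))) / (a^2 * a^2) - x * G1) / (x * x)"
    using h2 nz by (simp add: field_simps)
  show ?thesis
    unfolding G2 hd using nz o0 unfolding G1 ho' ho
    by (simp add: field_simps)
qed

lemma algII:
  fixes a b t t' x G1 G2 dlt c e p0 p1 s :: complex
  assumes nz: "a \<noteq> 0" "b \<noteq> 0" "x \<noteq> 0" "p0 \<noteq> 0" "c \<noteq> 0" "e \<noteq> 0"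
    and ho: "t = c * e * p0" and ho': "t' = c * (s * e * p0 + e * (p1 * x))"
    and h1: "t / b^2 = x * G1"
    and h2: "(t' * b^2 - t * (2 * b * (a * t))) / (b^2 * b^2) = x * G1 + x * (G2 * x)"
    and hd: "dlt = 1 / (a * b)"
  shows "- 2 * (x * G1 / dlt) = 1 + x * G2 / G1 - s - x * p1 / p0"
proof -
  have o0: "t \<noteq> 0" using ho nz by simp
  have G1: "G1 = t / (b^2 * x)" using h1 nz by (simp add: field_simps)
  have G2: "G2 = ((t' * b^2 - t * (2 * b * (a * t))) / (b^2 * b^2) - x * G1) / (x * x)"
    using h2 nz by (simp add: field_simps)
  show ?thesis
    unfolding G2 hd using nz o0 unfolding G1 ho' ho
    by (simp add: field_simps)
qed

lemma algIII:
  fixes a b vo t x G1 H1 dlt :: complex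
  assumes nz: "a \<noteq> 0" "b \<noteq> 0" "x \<noteq> 0"
    and h1: "- vo / a^2 = x * G1" and h2: "t / b^2 = x * H1"
    and hd: "dlt = 1 / (a * b)"
  shows "vo * t = - ((x * G1) * (x * H1)) / dlt^2"
proof -
  have "vo = -(a^2) * (x * G1)" using h1 nz by (simp add: field_simps minus_equation_iff[of vo])
  moreover have "t = b^2 * (x * H1)" using h2 nz by (simp add: field_simps)
  ultimately show ?thesis unfolding hd using nz by (simp add: field_simps power2_eq_square)
qed

lemma det_aux1: "a11*a22 - a12*a21 = (1::complex) \<Longrightarrow> a12 * vo * a21 - a11 * (a22 * vo) = - vo"
proof -
  assume h: "a11*a22 - a12*a21 = 1"
  have "a12 * vo * a21 - a11 * (a22 * vo) = - (a11*a22 - a12*a21) * vo" by (simp add: algebra_simps)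
  thus ?thesis using h by simp
qed

lemma det_aux2: "a11*a22 - a12*a21 = (1::complex) \<Longrightarrow> a11 * t * a22 - a12 * (a21 * t) = t"
proof -
  assume h: "a11*a22 - a12*a21 = 1"
  have "a11 * t * a22 - a12 * (a21 * t) = (a11*a22 - a12*a21) * t" by (simp add: algebra_simps)
  thus ?thesis using h by simp
qed



lemma subdeg_deriv_neg: "fls_subdegree (F::complex fls) < 0 \<Longrightarrow> fls_subdegree (fls_deriv F) = fls_subdegree F - 1"
  by (rule fls_subdegree_deriv) simp

lemma subdeg_deriv_nonneg: "fls_subdegree (F::complex fls) \<ge> 0 \<Longrightarrow> fls_subdegree (fls_deriv F) \<ge> 0"
proof (cases "fls_subdegree F = 0")
  case True thus ?thesis by (rule fls_deriv_subdegree0)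
next
  case False
  assume "fls_subdegree F \<ge> 0"
  thus ?thesis using fls_subdegree_deriv[OF False] False by simp
qed

lemma order_sign:
  fixes F Fs :: "complex fls"
  assumes h: "2 * fls_subdegree (F - Fs) = 2 + fls_subdegree (fls_deriv F) + fls_subdegree (fls_deriv Fs)"
  shows "(1 + fls_subdegree (fls_deriv F)) * (1 + fls_subdegree (fls_deriv Fs)) > 0"
proof -
  define n where "n = fls_subdegree F"
  define m where "m = fls_subdegree Fs"
  define a where "a = fls_subdegree (fls_deriv F)"
  define b where "b = fls_subdegree (fls_deriv Fs)"
  show ?thesis
  proof (cases "n \<ge> 0")
    case n: True
    have a: "a \<ge> 0" using subdeg_deriv_nonneg n by (simp add: a_def n_def)
    show ?thesis
    proof (cases "m \<ge> 0")
      case True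
      have "b \<ge> 0" using subdeg_deriv_nonneg True by (simp add: b_def m_def)
      thus ?thesis using a by (simp add: a_def[symmetric] b_def[symmetric])
    next
      case False
      have b: "b = m - 1" using subdeg_deriv_neg False by (simp add: b_def m_def)
      have "Fs \<noteq> 0" using False by (auto simp: m_def)
      hence "fls_subdegree (F - Fs) = m" using False n
        by (intro fls_subdegree_diff_eq2[of Fs F, unfolded m_def[symmetric]]) (auto simp: n_def m_def)
      hence "2 * m = 2 + a + b" using h by (simp add: a_def b_def)
      with b a False show ?thesis by simp
    qed
  next
    case n: False
    have a: "a = n - 1" using subdeg_deriv_neg n by (simp add: a_def n_def)
    have F0: "F \<noteq> 0" using n by (auto simp: n_def)
    show ?thesis
    proof (cases "m \<ge> 0")
      case True
      have b: "b \<ge> 0" using subdeg_deriv_nonneg True by (simp add: b_def m_def)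
      have "fls_subdegree (F - Fs) = n" using True n F0
        unfolding n_def by (intro fls_subdegree_diff_eq1) (auto simp: n_def m_def)
      hence "2 * n = 2 + a + b" using h by (simp add: a_def b_def n_def)
      with b a n show ?thesis by simp
    next
      case False
      have b: "b = m - 1" using subdeg_deriv_neg False by (simp add: b_def m_def)
      have "(1 + a) * (1 + b) > 0" using a b n False by (intro mult_neg_neg) auto
      thus ?thesis by (simp add: a_def b_def)
    qed
  qed
qed

lemma at0_to_right: "filterlim (\<lambda>t::real. complex_of_real t) (at 0) (at_right 0)"
proof -
  have "((\<lambda>t::real. complex_of_real t) \<longlongrightarrow> of_real 0) (at_right 0)"
    by (intro tendsto_of_real tendsto_ident_at)
  moreover have "eventually (\<lambda>t::real. complex_of_real t \<noteq> 0) (at_right 0)"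
    by (simp add: eventually_at_right_less eventually_mono[OF eventually_at_right_less])
  ultimately show ?thesis by (simp add: filterlim_at)
qed

lemma tendsto_at0_to_right:
  "(h \<longlongrightarrow> L) (at (0::complex)) \<Longrightarrow> ((\<lambda>t::real. h (complex_of_real t)) \<longlongrightarrow> L) (at_right 0)"
  using filterlim_compose[OF _ at0_to_right] by blast

lemma eventually_at0_to_right:
  "eventually P (at (0::complex)) \<Longrightarrow> eventually (\<lambda>t::real. P (complex_of_real t)) (at_right 0)"
  using eventually_compose_filterlim[OF _ at0_to_right] by blast

lemma expansion_nonzero:
  assumes "f has_laurent_expansion F" "eventually (\<lambda>t::real. f (complex_of_real t) \<noteq> 0) (at_right 0)"
  shows "F \<noteq> 0"
proof
  assume "F = 0"
  hence "eventually (\<lambda>z. f z = 0) (at 0)" using assms(1) by (auto simp: has_laurent_expansion_def)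
  hence "eventually (\<lambda>t::real. f (complex_of_real t) = 0) (at_right 0)" by (rule eventually_at0_to_right)
  with assms(2) have "eventually (\<lambda>t::real. False) (at_right 0)" by eventually_elim auto
  thus False by simp
qed



lemma core:
  fixes E :: "complex \<Rightarrow> complex^2^2" and om th \<phi> \<psi> :: "complex \<Rightarrow> complex"
    and c c' :: complex and s r :: real
  assumes ff: "flat_front E om th" and reg: "regular_end E"
    and r: "0 < r" "r \<le> 1"
    and phol: "\<phi> holomorphic_on ball 0 r" and pshol: "\<psi> holomorphic_on ball 0 r"
    and phnz: "\<forall>z\<in>ball 0 r. \<phi> z \<noteq> 0" and psnz: "\<forall>z\<in>ball 0 r. \<psi> z \<noteq> 0"
    and omr: "\<forall>w. Re w < ln r \<longrightarrow> om w = c * exp (of_real s * w) * \<phi> (exp w)"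
    and thr: "\<forall>w. Re w < ln r \<longrightarrow> th w = c' * exp (of_real s * w) * \<psi> (exp w)"
    and c0: "c \<noteq> 0" and c'0: "c' \<noteq> 0" and sle: "s \<le> 0"
  shows "s = 0 \<and> (\<exists>q::real. q > 0 \<and> c * c' * \<phi> 0 * \<psi> 0 = of_real q)"
proof -
  define A11 where "A11 = (\<lambda>w. E w $ 1 $ 1)"
  define A21 where "A21 = (\<lambda>w. E w $ 2 $ 1)"
  define A12 where "A12 = (\<lambda>w. E w $ 1 $ 2)"
  define A22 where "A22 = (\<lambda>w. E w $ 2 $ 2)"
  have ode: "(A11 has_field_derivative A12 w * om w) (at w)"
     "(A21 has_field_derivative A22 w * om w) (at w)"
     "(A12 has_field_derivative A11 w * th w) (at w)"
     "(A22 has_field_derivative A21 w * th w) (at w)"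
     "A11 w * A22 w - A12 w * A21 w = 1" if "w \<in> left_half_plane" for w
    using flat_front_ode[OF ff that] unfolding A11_def A12_def A21_def A22_def by auto
  define g where "g = (\<lambda>z. hypGauss E (Ln z))"
  define gs where "gs = (\<lambda>z. hypGauss_star E (Ln z))"
  obtain F where F: "g has_laurent_expansion F"
    using reg unfolding regular_end_def meromorphic_on_def g_def by auto
  obtain Fs where Fs: "gs has_laurent_expansion Fs"
    using reg unfolding regular_end_def meromorphic_on_def gs_def by auto
  obtain \<rho> where \<rho>: "0 < \<rho>" "\<rho> \<le> r"
    and gev: "\<And>z. z \<in> ball 0 \<rho> - {0} \<Longrightarrow> g z = eval_fls F z"
    and gsev: "\<And>z. z \<in> ball 0 \<rho> - {0} \<Longrightarrow> gs z = eval_fls Fs z"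
    and rF: "ereal \<rho> \<le> fls_conv_radius F" and rFs: "ereal \<rho> \<le> fls_conv_radius Fs"
  proof -
    from F have "fls_conv_radius F > 0" "eventually (\<lambda>z. eval_fls F z = g z) (at 0)"
      by (auto simp: has_laurent_expansion_def)
    moreover from Fs have "fls_conv_radius Fs > 0" "eventually (\<lambda>z. eval_fls Fs z = gs z) (at 0)"
      by (auto simp: has_laurent_expansion_def)
    ultimately obtain d1 d2 R1 R2 where d: "d1 > 0" "d2 > 0"
      "\<forall>z. z \<noteq> 0 \<and> dist z 0 < d1 \<longrightarrow> eval_fls F z = g z"
      "\<forall>z. z \<noteq> 0 \<and> dist z 0 < d2 \<longrightarrow> eval_fls Fs z = gs z"
      and R: "0 < ereal R1" "ereal R1 < fls_conv_radius F" "0 < ereal R2" "ereal R2 < fls_conv_radius Fs"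
      unfolding eventually_at by (metis UNIV_I ereal_dense2)
    define \<rho> where "\<rho> = Min {d1, d2, R1, R2, r}"
    have "0 < \<rho>" using d R r by (simp add: \<rho>_def)
    moreover have "\<rho> \<le> r" "\<rho> \<le> d1" "\<rho> \<le> d2" "\<rho> \<le> R1" "\<rho> \<le> R2" by (simp_all add: \<rho>_def)
    ultimately show ?thesis
    proof (intro that[of \<rho>])
      assume h: "0 < \<rho>" "\<rho> \<le> r" "\<rho> \<le> d1" "\<rho> \<le> d2" "\<rho> \<le> R1" "\<rho> \<le> R2"
      show "g z = eval_fls F z" if "z \<in> ball 0 \<rho> - {0}" for z
        using d(3) that h by auto
      show "gs z = eval_fls Fs z" if "z \<in> ball 0 \<rho> - {0}" for z
        using d(4) that h by auto
      show "ereal \<rho> \<le> fls_conv_radius F" using R(2) h(5) by (meson ereal_less_eq(3) order.trans less_imp_le)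
      show "ereal \<rho> \<le> fls_conv_radius Fs" using R(4) h(6) by (meson ereal_less_eq(3) order.trans less_imp_le)
    qed
  qed
  define Op where "Op = ball 0 \<rho> - {0::complex}"
  have oO: "open Op" unfolding Op_def by auto
  have gh: "g holomorphic_on Op"
  proof -
    have "eval_fls F holomorphic_on Op"
    proof (rule holomorphic_on_eval_fls)
      have "ereal (cmod x) < fls_conv_radius F" if "cmod x < \<rho>" for x
      proof -
        have "ereal (cmod x) < ereal \<rho>" using that by simp
        thus ?thesis using rF by (rule less_le_trans)
      qed
      thus "Op \<subseteq> eball 0 (fls_conv_radius F) - (if fls_subdegree F \<ge> 0 then {} else {0})"
        by (auto simp: Op_def)
    qed
    thus ?thesis by (rule holomorphic_transform) (use gev in \<open>auto simp: Op_def\<close>)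
  qed
  have gsh: "gs holomorphic_on Op"
  proof -
    have "eval_fls Fs holomorphic_on Op"
    proof (rule holomorphic_on_eval_fls)
      have "ereal (cmod x) < fls_conv_radius Fs" if "cmod x < \<rho>" for x
      proof -
        have "ereal (cmod x) < ereal \<rho>" using that by simp
        thus ?thesis using rFs by (rule less_le_trans)
      qed
      thus "Op \<subseteq> eball 0 (fls_conv_radius Fs) - (if fls_subdegree Fs \<ge> 0 then {} else {0})"
        by (auto simp: Op_def)
    qed
    thus ?thesis by (rule holomorphic_transform) (use gsev in \<open>auto simp: Op_def\<close>)
  qed
  define S where "S = {w. Re w < ln \<rho>} \<inter> {w. Im w > -pi} \<inter> {w. Im w < pi}"
  have oS: "open S" unfolding S_def
    by (intro open_Int open_halfspace_Re_lt open_halfspace_Im_gt open_halfspace_Im_lt)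
  have lnr: "ln \<rho> \<le> ln r" using \<rho> by simp
  have lnr0: "ln r \<le> 0" using r by simp
  have Sprops: "w \<in> left_half_plane" "Re w < ln r" "exp w \<in> Op" "Ln (exp w) = w" "cmod (exp w) < \<rho>"
    if "w \<in> S" for w
  proof -
    show "Re w < ln r" using that lnr unfolding S_def by auto
    thus "w \<in> left_half_plane" using lnr0 unfolding left_half_plane_def by auto
    have "exp (Re w) < exp (ln \<rho>)" using that unfolding S_def by simp
    thus "cmod (exp w) < \<rho>" using \<rho> by simp
    thus "exp w \<in> Op" unfolding Op_def by simp
    show "Ln (exp w) = w" using that unfolding S_def by (intro Ln_exp) auto
  qed
  have gexp: "g (exp w) = A11 w / A21 w" if "w \<in> S" for w
    using Sprops(4)[OF that] by (simp add: g_def hypGauss_def A11_def A21_def)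
  have gsexp: "gs (exp w) = A12 w / A22 w" if "w \<in> S" for w
    using Sprops(4)[OF that] by (simp add: gs_def hypGauss_star_def A12_def A22_def)
  have expr: "exp w \<in> ball 0 r" if "Re w < ln r" for w
  proof -
    have "exp (Re w) < exp (ln r)" using that by simp
    thus ?thesis using r by simp
  qed
  have omnz: "om w \<noteq> 0" and thnz: "th w \<noteq> 0" if "Re w < ln r" for w
    using omr thr that phnz psnz expr[OF that] c0 c'0 by auto
  have gcont: "isCont g z" if "z \<in> Op" for z
    using gh oO that holomorphic_on_imp_continuous_on continuous_on_eq_continuous_at by blast
  have gscont: "isCont gs z" if "z \<in> Op" for z
    using gsh oO that holomorphic_on_imp_continuous_on continuous_on_eq_continuous_at by blast
  have A21nz: "A21 w \<noteq> 0" if wS: "w \<in> S" for w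
  proof
    assume z: "A21 w = 0"
    note wL = Sprops(1)[OF wS]
    have "A11 w * A22 w = 1" using ode(5)[OF wL] z by simp
    hence a11: "A11 w \<noteq> 0" and a22: "A22 w \<noteq> 0" by auto
    have "((\<lambda>v. (A21 v - A21 w) / (v - w)) \<longlongrightarrow> A22 w * om w) (at w)"
      using ode(2)[OF wL] by (simp add: has_field_derivative_iff)
    hence ev1: "eventually (\<lambda>v. (A21 v - A21 w) / (v - w) \<noteq> 0) (at w)"
      by (rule tendsto_imp_eventually_ne) (use a22 omnz[OF Sprops(2)[OF wS]] in simp)
    have ev2: "eventually (\<lambda>v. v \<in> S) (at w)" by (rule eventually_at_in_open'[OF oS wS])
    have ev: "eventually (\<lambda>v. g (exp v) * A21 v = A11 v) (at w)"
      using ev1 ev2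
    proof eventually_elim
      case (elim v)
      hence "A21 v \<noteq> 0" using z by auto
      thus ?case using gexp[OF elim(2)] by simp
    qed
    have c21: "isCont A21 w" using ode(2)[OF wL] by (rule DERIV_isCont)
    have c11: "isCont A11 w" using ode(1)[OF wL] by (rule DERIV_isCont)
    have "isCont (\<lambda>v. g (exp v)) w"
      by (rule continuous_at_compose[of w exp g, unfolded o_def]) (auto intro: gcont Sprops(3)[OF wS])
    hence "((\<lambda>v. g (exp v) * A21 v) \<longlongrightarrow> g (exp w) * A21 w) (at w)"
      using c21 by (intro tendsto_intros) (auto simp: isCont_def)
    hence "(A11 \<longlongrightarrow> 0) (at w)" using z by (simp add: tendsto_cong[OF ev])
    moreover have "(A11 \<longlongrightarrow> A11 w) (at w)" using c11 by (simp add: isCont_def)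
    ultimately have "A11 w = 0" by (intro tendsto_unique[of "at w"]) auto
    thus False using a11 by simp
  qed
  have A22nz: "A22 w \<noteq> 0" if wS: "w \<in> S" for w
  proof
    assume z: "A22 w = 0"
    note wL = Sprops(1)[OF wS]
    have "A12 w * A21 w = -1" using ode(5)[OF wL] z by (simp add: minus_equation_iff[of "A12 w * A21 w"])
    hence a12: "A12 w \<noteq> 0" and a21: "A21 w \<noteq> 0" by auto
    have "((\<lambda>v. (A22 v - A22 w) / (v - w)) \<longlongrightarrow> A21 w * th w) (at w)"
      using ode(4)[OF wL] by (simp add: has_field_derivative_iff)
    hence ev1: "eventually (\<lambda>v. (A22 v - A22 w) / (v - w) \<noteq> 0) (at w)"
      by (rule tendsto_imp_eventually_ne) (use a21 thnz[OF Sprops(2)[OF wS]] in simp)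
    have ev2: "eventually (\<lambda>v. v \<in> S) (at w)" by (rule eventually_at_in_open'[OF oS wS])
    have ev: "eventually (\<lambda>v. gs (exp v) * A22 v = A12 v) (at w)"
      using ev1 ev2
    proof eventually_elim
      case (elim v)
      hence "A22 v \<noteq> 0" using z by auto
      thus ?case using gsexp[OF elim(2)] by simp
    qed
    have c22: "isCont A22 w" using ode(4)[OF wL] by (rule DERIV_isCont)
    have c12: "isCont A12 w" using ode(3)[OF wL] by (rule DERIV_isCont)
    have "isCont (\<lambda>v. gs (exp v)) w"
      by (rule continuous_at_compose[of w exp gs, unfolded o_def]) (auto intro: gscont Sprops(3)[OF wS])
    hence "((\<lambda>v. gs (exp v) * A22 v) \<longlongrightarrow> gs (exp w) * A22 w) (at w)"
      using c22 by (intro tendsto_intros) (auto simp: isCont_def)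
    hence "(A12 \<longlongrightarrow> 0) (at w)" using z by (simp add: tendsto_cong[OF ev])
    moreover have "(A12 \<longlongrightarrow> A12 w) (at w)" using c12 by (simp add: isCont_def)
    ultimately have "A12 w = 0" by (intro tendsto_unique[of "at w"]) auto
    thus False using a12 by simp
  qed
  have gder: "(g has_field_derivative deriv g z) (at z)" if "z \<in> Op" for z
    by (rule holomorphic_derivI[OF gh oO that])
  have gsder: "(gs has_field_derivative deriv gs z) (at z)" if "z \<in> Op" for z
    by (rule holomorphic_derivI[OF gsh oO that])
  have g2der: "(deriv g has_field_derivative deriv (deriv g) z) (at z)" if "z \<in> Op" for z
    by (rule holomorphic_derivI[OF holomorphic_deriv[OF gh oO] oO that])
  have gs2der: "(deriv gs has_field_derivative deriv (deriv gs) z) (at z)" if "z \<in> Op" for z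
    by (rule holomorphic_derivI[OF holomorphic_deriv[OF gsh oO] oO that])
  have phder: "(\<phi> has_field_derivative deriv \<phi> z) (at z)" if "z \<in> ball 0 r" for z
    by (rule holomorphic_derivI[OF phol _ that]) simp
  have psder: "(\<psi> has_field_derivative deriv \<psi> z) (at z)" if "z \<in> ball 0 r" for z
    by (rule holomorphic_derivI[OF pshol _ that]) simp
  define om' where "om' = (\<lambda>w. c * (of_real s * exp (of_real s * w) * \<phi> (exp w) + exp (of_real s * w) * (deriv \<phi> (exp w) * exp w)))"
  define th' where "th' = (\<lambda>w. c' * (of_real s * exp (of_real s * w) * \<psi> (exp w) + exp (of_real s * w) * (deriv \<psi> (exp w) * exp w)))"
  have oDr: "open {w. Re w < ln r}" by (rule open_halfspace_Re_lt)
  have omder: "(om has_field_derivative om' w) (at w)" if "Re w < ln r" for w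
  proof -
    have d1: "((\<lambda>v. \<phi> (exp v)) has_field_derivative deriv \<phi> (exp w) * exp w) (at w)"
      by (rule DERIV_chain2[where f=\<phi> and g=exp]) (auto intro: phder expr that)
    have d2: "((\<lambda>v. c * exp (of_real s * v)) has_field_derivative c * (exp (of_real s * w) * of_real s)) (at w)"
      by (intro DERIV_cmult DERIV_chain2[where f=exp and g="\<lambda>v. of_real s * v"] DERIV_exp DERIV_cmult_Id)
    have "((\<lambda>v. c * exp (of_real s * v) * \<phi> (exp v)) has_field_derivative om' w) (at w)"
      by (rule DERIV_cong[OF DERIV_mult[OF d2 d1]]) (simp add: om'_def algebra_simps)
    thus ?thesis
      by (rule has_field_derivative_transform_within_open[OF _ oDr]) (use that omr in auto)
  qed
  have thder: "(th has_field_derivative th' w) (at w)" if "Re w < ln r" for w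
  proof -
    have d1: "((\<lambda>v. \<psi> (exp v)) has_field_derivative deriv \<psi> (exp w) * exp w) (at w)"
      by (rule DERIV_chain2[where f=\<psi> and g=exp]) (auto intro: psder expr that)
    have d2: "((\<lambda>v. c' * exp (of_real s * v)) has_field_derivative c' * (exp (of_real s * w) * of_real s)) (at w)"
      by (intro DERIV_cmult DERIV_chain2[where f=exp and g="\<lambda>v. of_real s * v"] DERIV_exp DERIV_cmult_Id)
    have "((\<lambda>v. c' * exp (of_real s * v) * \<psi> (exp v)) has_field_derivative th' w) (at w)"
      by (rule DERIV_cong[OF DERIV_mult[OF d2 d1]]) (simp add: th'_def algebra_simps)
    thus ?thesis
      by (rule has_field_derivative_transform_within_open[OF _ oDr]) (use that thr in auto)
  qed
  have D1all: "- om w / (A21 w)^2 = exp w * deriv g (exp w)"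
     and D2all: "th w / (A22 w)^2 = exp w * deriv gs (exp w)" if wS: "w \<in> S" for w
  proof -
    note wL = Sprops(1)[OF wS] and wr = Sprops(2)[OF wS] and xO = Sprops(3)[OF wS]
    define x where "x = exp w"
    have a0: "A21 w \<noteq> 0" and b0: "A22 w \<noteq> 0" using A21nz A22nz wS by auto
    have det: "A11 w * A22 w - A12 w * A21 w = 1" by (rule ode(5)[OF wL])
    have eqS: "\<And>v. v \<in> S \<Longrightarrow> g (exp v) = A11 v / A21 v" by (rule gexp)
    have eqSs: "\<And>v. v \<in> S \<Longrightarrow> gs (exp v) = A12 v / A22 v" by (rule gsexp)
    have dGe: "((\<lambda>v. g (exp v)) has_field_derivative deriv g x * exp w) (at w)"
      unfolding x_def by (rule DERIV_chain2[where f=g and g=exp]) (auto intro: gder xO)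
    have dGq: "((\<lambda>v. A11 v / A21 v) has_field_derivative - om w / (A21 w)^2) (at w)"
      by (rule DERIV_cong[OF DERIV_divide[OF ode(1)[OF wL] ode(2)[OF wL] a0]])
         (use det_aux1[OF det] a0 in \<open>simp add: power2_eq_square\<close>)
    have "((\<lambda>v. A11 v / A21 v) has_field_derivative deriv g x * exp w) (at w)"
      by (rule has_field_derivative_transform_within_open[OF dGe oS wS]) (use eqS in auto)
    thus "- om w / (A21 w)^2 = exp w * deriv g (exp w)" using DERIV_unique[OF dGq] by (simp add: x_def mult.commute)
    have dGse: "((\<lambda>v. gs (exp v)) has_field_derivative deriv gs x * exp w) (at w)"
      unfolding x_def by (rule DERIV_chain2[where f=gs and g=exp]) (auto intro: gsder xO)
    have dGsq: "((\<lambda>v. A12 v / A22 v) has_field_derivative th w / (A22 w)^2) (at w)"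
      by (rule DERIV_cong[OF DERIV_divide[OF ode(3)[OF wL] ode(4)[OF wL] b0]])
         (use det_aux2[OF det] b0 in \<open>simp add: power2_eq_square\<close>)
    have "((\<lambda>v. A12 v / A22 v) has_field_derivative deriv gs x * exp w) (at w)"
      by (rule has_field_derivative_transform_within_open[OF dGse oS wS]) (use eqSs in auto)
    thus "th w / (A22 w)^2 = exp w * deriv gs (exp w)" using DERIV_unique[OF dGsq] by (simp add: x_def mult.commute)
  qed
  have key: "2 * (exp w * deriv g (exp w) / (g (exp w) - gs (exp w))) =
        1 + exp w * deriv (deriv g) (exp w) / deriv g (exp w) - of_real s - exp w * deriv \<phi> (exp w) / \<phi> (exp w)"
     "- 2 * (exp w * deriv gs (exp w) / (g (exp w) - gs (exp w))) =
        1 + exp w * deriv (deriv gs) (exp w) / deriv gs (exp w) - of_real s - exp w * deriv \<psi> (exp w) / \<psi> (exp w)"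
     "om w * th w = - ((exp w * deriv g (exp w)) * (exp w * deriv gs (exp w))) / (g (exp w) - gs (exp w))^2"
     "g (exp w) - gs (exp w) \<noteq> 0" "deriv g (exp w) \<noteq> 0" "deriv gs (exp w) \<noteq> 0"
    if wS: "w \<in> S" for w
  proof -
    note wL = Sprops(1)[OF wS] and wr = Sprops(2)[OF wS] and xO = Sprops(3)[OF wS]
    define x where "x = exp w"
    have a0: "A21 w \<noteq> 0" and b0: "A22 w \<noteq> 0" using A21nz A22nz wS by auto
    have x0: "x \<noteq> 0" by (simp add: x_def)
    have det: "A11 w * A22 w - A12 w * A21 w = 1" by (rule ode(5)[OF wL])
    have dlt: "g x - gs x = 1 / (A21 w * A22 w)"
      unfolding x_def gexp[OF wS] gsexp[OF wS] using a0 b0 det by (simp add: field_simps)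
    have eqS: "\<And>v. v \<in> S \<Longrightarrow> g (exp v) = A11 v / A21 v" by (rule gexp)
    have eqSs: "\<And>v. v \<in> S \<Longrightarrow> gs (exp v) = A12 v / A22 v" by (rule gsexp)
    have D1: "- om w / (A21 w)^2 = x * deriv g x" using D1all[OF wS] by (simp add: x_def)
    have D2: "th w / (A22 w)^2 = x * deriv gs x" using D2all[OF wS] by (simp add: x_def)
    have dQ: "((\<lambda>v. exp v * deriv g (exp v)) has_field_derivative x * deriv g x + x * (deriv (deriv g) x * x)) (at w)"
    proof -
      have "((\<lambda>v. deriv g (exp v)) has_field_derivative deriv (deriv g) x * exp w) (at w)"
        unfolding x_def by (rule DERIV_chain2[where f="deriv g" and g=exp]) (auto intro: g2der xO)
      from DERIV_mult[OF DERIV_exp this] show ?thesis by (simp add: x_def algebra_simps)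
    qed
    have dP: "((\<lambda>v. - om v / (A21 v)^2) has_field_derivative
        (- om' w * (A21 w)^2 - - om w * (2 * A21 w * (A22 w * om w))) / ((A21 w)^2 * (A21 w)^2)) (at w)"
    proof -
      have "((\<lambda>v. (A21 v)^2) has_field_derivative 2 * A21 w * (A22 w * om w)) (at w)"
        by (rule DERIV_cong[OF DERIV_power[OF ode(2)[OF wL], of 2]]) simp
      from DERIV_divide[OF DERIV_minus[OF omder[OF wr]] this] show ?thesis using a0 by simp
    qed
    have "((\<lambda>v. - om v / (A21 v)^2) has_field_derivative x * deriv g x + x * (deriv (deriv g) x * x)) (at w)"
      by (rule has_field_derivative_transform_within_open[OF dQ oS wS]) (use D1all in auto)
    hence D3: "(- om' w * (A21 w)^2 - - om w * (2 * A21 w * (A22 w * om w))) / ((A21 w)^2 * (A21 w)^2)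
        = x * deriv g x + x * (deriv (deriv g) x * x)" using DERIV_unique[OF dP] by simp
    have dQs: "((\<lambda>v. exp v * deriv gs (exp v)) has_field_derivative x * deriv gs x + x * (deriv (deriv gs) x * x)) (at w)"
    proof -
      have "((\<lambda>v. deriv gs (exp v)) has_field_derivative deriv (deriv gs) x * exp w) (at w)"
        unfolding x_def by (rule DERIV_chain2[where f="deriv gs" and g=exp]) (auto intro: gs2der xO)
      from DERIV_mult[OF DERIV_exp this] show ?thesis by (simp add: x_def algebra_simps)
    qed
    have dPs: "((\<lambda>v. th v / (A22 v)^2) has_field_derivative
        (th' w * (A22 w)^2 - th w * (2 * A22 w * (A21 w * th w))) / ((A22 w)^2 * (A22 w)^2)) (at w)"
    proof -
      have "((\<lambda>v. (A22 v)^2) has_field_derivative 2 * A22 w * (A21 w * th w)) (at w)"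
        by (rule DERIV_cong[OF DERIV_power[OF ode(4)[OF wL], of 2]]) simp
      from DERIV_divide[OF thder[OF wr] this] show ?thesis using b0 by simp
    qed
    have "((\<lambda>v. th v / (A22 v)^2) has_field_derivative x * deriv gs x + x * (deriv (deriv gs) x * x)) (at w)"
      by (rule has_field_derivative_transform_within_open[OF dQs oS wS]) (use D2all in auto)
    hence D4: "(th' w * (A22 w)^2 - th w * (2 * A22 w * (A21 w * th w))) / ((A22 w)^2 * (A22 w)^2)
        = x * deriv gs x + x * (deriv (deriv gs) x * x)" using DERIV_unique[OF dPs] by simp
    have p0: "\<phi> x \<noteq> 0" "\<psi> x \<noteq> 0" using phnz psnz expr[OF wr] by (auto simp: x_def)
    have e0: "exp (of_real s * w) \<noteq> 0" by simp
    have omx: "om w = c * exp (of_real s * w) * \<phi> x" using omr wr by (simp add: x_def)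
    have thx: "th w = c' * exp (of_real s * w) * \<psi> x" using thr wr by (simp add: x_def)
    have om'x: "om' w = c * (of_real s * exp (of_real s * w) * \<phi> x + exp (of_real s * w) * (deriv \<phi> x * x))"
      by (simp add: om'_def x_def)
    have th'x: "th' w = c' * (of_real s * exp (of_real s * w) * \<psi> x + exp (of_real s * w) * (deriv \<psi> x * x))"
      by (simp add: th'_def x_def)
    have "2 * (x * deriv g x / (g x - gs x)) = 1 + x * deriv (deriv g) x / deriv g x - of_real s - x * deriv \<phi> x / \<phi> x"
      by (rule algI[OF a0 b0 x0 p0(1) c0 e0 omx om'x D1 _ dlt]) (use D3 in \<open>simp add: power2_eq_square\<close>)
    thus "2 * (exp w * deriv g (exp w) / (g (exp w) - gs (exp w))) =
        1 + exp w * deriv (deriv g) (exp w) / deriv g (exp w) - of_real s - exp w * deriv \<phi> (exp w) / \<phi> (exp w)"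
      by (simp add: x_def)
    have "- 2 * (x * deriv gs x / (g x - gs x)) = 1 + x * deriv (deriv gs) x / deriv gs x - of_real s - x * deriv \<psi> x / \<psi> x"
      by (rule algII[OF a0 b0 x0 p0(2) c'0 e0 thx th'x D2 _ dlt]) (use D4 in \<open>simp add: power2_eq_square\<close>)
    thus "- 2 * (exp w * deriv gs (exp w) / (g (exp w) - gs (exp w))) =
        1 + exp w * deriv (deriv gs) (exp w) / deriv gs (exp w) - of_real s - exp w * deriv \<psi> (exp w) / \<psi> (exp w)"
      by (simp add: x_def)
    show "om w * th w = - ((exp w * deriv g (exp w)) * (exp w * deriv gs (exp w))) / (g (exp w) - gs (exp w))^2"
      using algIII[OF a0 b0 x0 D1 D2 dlt] by (simp add: x_def)
    show "g (exp w) - gs (exp w) \<noteq> 0" using dlt a0 b0 by (simp add: x_def)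
    show "deriv g (exp w) \<noteq> 0" using D1 omnz[OF wr] a0 x0 by (auto simp: x_def)
    show "deriv gs (exp w) \<noteq> 0" using D2 thnz[OF wr] b0 x0 by (auto simp: x_def)
  qed
  define a where "a = fls_subdegree (fls_deriv F)"
  define b where "b = fls_subdegree (fls_deriv Fs)"
  define k where "k = fls_subdegree (F - Fs)"
  have evpos: "eventually (\<lambda>t::real. 0 < t \<and> t < \<rho>) (at_right 0)"
    using \<rho>(1) by (auto simp: eventually_at_right_field intro!: exI[of _ \<rho>])
  have tS: "complex_of_real (ln t) \<in> S" and texp: "exp (complex_of_real (ln t)) = complex_of_real t"
    if "0 < t" "t < \<rho>" for t
  proof -
    show "exp (complex_of_real (ln t)) = complex_of_real t" using that by (metis exp_ln exp_of_real)
    have "ln t < ln \<rho>" using that by simp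
    thus "complex_of_real (ln t) \<in> S" unfolding S_def by auto
  qed
  have ev_dg: "eventually (\<lambda>t::real. deriv g (of_real t) \<noteq> 0) (at_right 0)"
    using evpos by eventually_elim (metis key(5) tS texp)
  have ev_dgs: "eventually (\<lambda>t::real. deriv gs (of_real t) \<noteq> 0) (at_right 0)"
    using evpos by eventually_elim (metis key(6) tS texp)
  have ev_dlt: "eventually (\<lambda>t::real. g (of_real t) - gs (of_real t) \<noteq> 0) (at_right 0)"
    using evpos by eventually_elim (metis key(4) tS texp)
  have dF: "deriv g has_laurent_expansion fls_deriv F" by (rule has_laurent_expansion_deriv[OF F])
  have dFs: "deriv gs has_laurent_expansion fls_deriv Fs" by (rule has_laurent_expansion_deriv[OF Fs])
  have FFs: "(\<lambda>z. g z - gs z) has_laurent_expansion F - Fs" by (intro has_laurent_expansion_diff F Fs)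
  have nz1: "fls_deriv F \<noteq> 0" by (rule expansion_nonzero[OF dF ev_dg])
  have nz2: "fls_deriv Fs \<noteq> 0" by (rule expansion_nonzero[OF dFs ev_dgs])
  have nz3: "F - Fs \<noteq> 0" by (rule expansion_nonzero[OF FFs ev_dlt])
  have L1: "((\<lambda>t::real. of_real t * deriv (deriv g) (of_real t) / deriv g (of_real t)) \<longlongrightarrow> of_int a) (at_right 0)"
    unfolding a_def by (rule tendsto_at0_to_right[OF logderiv_tendsto[OF dF nz1]])
  have L2: "((\<lambda>t::real. of_real t * deriv (deriv gs) (of_real t) / deriv gs (of_real t)) \<longlongrightarrow> of_int b) (at_right 0)"
    unfolding b_def by (rule tendsto_at0_to_right[OF logderiv_tendsto[OF dFs nz2]])
  have L3: "((\<lambda>t::real. of_real t * deriv (\<lambda>z. g z - gs z) (of_real t) / (g (of_real t) - gs (of_real t))) \<longlongrightarrow> of_int k) (at_right 0)"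
    unfolding k_def by (rule tendsto_at0_to_right[OF logderiv_tendsto[OF FFs nz3]])
  have b0r: "(0::complex) \<in> ball 0 r" using r by simp
  have Lph: "((\<lambda>t::real. of_real t * deriv \<phi> (of_real t) / \<phi> (of_real t)) \<longlongrightarrow> 0) (at_right 0)"
  proof -
    have c1: "isCont (deriv \<phi>) 0"
      using holomorphic_deriv[OF phol open_ball] b0r holomorphic_on_imp_continuous_on
            continuous_on_eq_continuous_at open_ball by blast
    have c2: "isCont \<phi> 0"
      using phol b0r holomorphic_on_imp_continuous_on continuous_on_eq_continuous_at open_ball by blast
    have "((\<lambda>z. z * deriv \<phi> z / \<phi> z) \<longlongrightarrow> 0 * deriv \<phi> 0 / \<phi> 0) (at 0)"
      using c1 c2 phnz b0r by (intro tendsto_intros) (auto simp: isCont_def)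
    thus ?thesis using tendsto_at0_to_right by fastforce
  qed
  have Lps: "((\<lambda>t::real. of_real t * deriv \<psi> (of_real t) / \<psi> (of_real t)) \<longlongrightarrow> 0) (at_right 0)"
  proof -
    have c1: "isCont (deriv \<psi>) 0"
      using holomorphic_deriv[OF pshol open_ball] b0r holomorphic_on_imp_continuous_on
            continuous_on_eq_continuous_at open_ball by blast
    have c2: "isCont \<psi> 0"
      using pshol b0r holomorphic_on_imp_continuous_on continuous_on_eq_continuous_at open_ball by blast
    have "((\<lambda>z. z * deriv \<psi> z / \<psi> z) \<longlongrightarrow> 0 * deriv \<psi> 0 / \<psi> 0) (at 0)"
      using c1 c2 psnz b0r by (intro tendsto_intros) (auto simp: isCont_def)
    thus ?thesis using tendsto_at0_to_right by fastforce
  qed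
  define T where "T = (\<lambda>t::real. of_real t * deriv g (of_real t) / (g (of_real t) - gs (of_real t)))"
  define Ts where "Ts = (\<lambda>t::real. of_real t * deriv gs (of_real t) / (g (of_real t) - gs (of_real t)))"
  have LT: "(T \<longlongrightarrow> (1 + of_int a - of_real s - 0) / 2) (at_right 0)"
  proof -
    have "((\<lambda>t::real. 1 + of_real t * deriv (deriv g) (of_real t) / deriv g (of_real t) - of_real s
            - of_real t * deriv \<phi> (of_real t) / \<phi> (of_real t)) \<longlongrightarrow> 1 + of_int a - of_real s - 0) (at_right 0)"
      by (intro tendsto_intros L1 Lph)
    moreover have "eventually (\<lambda>t. 1 + of_real t * deriv (deriv g) (of_real t) / deriv g (of_real t) - of_real s
            - of_real t * deriv \<phi> (of_real t) / \<phi> (of_real t) = 2 * T t) (at_right 0)"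
      using evpos
    proof eventually_elim
      case (elim t)
      note t0 = conjunct1[OF elim(1)] conjunct2[OF elim(1)]
      from key(1)[OF tS[OF t0(1) t0(2)]] show ?case unfolding texp[OF t0(1) t0(2)] T_def by (rule sym)
    qed
    ultimately have "((\<lambda>t. 2 * T t) \<longlongrightarrow> 1 + of_int a - of_real s - 0) (at_right 0)"
      by (rule Lim_transform_eventually)
    hence "((\<lambda>t. 2 * T t / 2) \<longlongrightarrow> (1 + of_int a - of_real s - 0) / 2) (at_right 0)"
      by (intro tendsto_intros) simp_all
    thus ?thesis by simp
  qed
  have LTs: "(Ts \<longlongrightarrow> - (1 + of_int b - of_real s - 0) / 2) (at_right 0)"
  proof -
    have "((\<lambda>t::real. 1 + of_real t * deriv (deriv gs) (of_real t) / deriv gs (of_real t) - of_real s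
            - of_real t * deriv \<psi> (of_real t) / \<psi> (of_real t)) \<longlongrightarrow> 1 + of_int b - of_real s - 0) (at_right 0)"
      by (intro tendsto_intros L2 Lps)
    moreover have "eventually (\<lambda>t. 1 + of_real t * deriv (deriv gs) (of_real t) / deriv gs (of_real t) - of_real s
            - of_real t * deriv \<psi> (of_real t) / \<psi> (of_real t) = - 2 * Ts t) (at_right 0)"
      using evpos
    proof eventually_elim
      case (elim t)
      note t0 = conjunct1[OF elim(1)] conjunct2[OF elim(1)]
      from key(2)[OF tS[OF t0(1) t0(2)]] show ?case unfolding texp[OF t0(1) t0(2)] Ts_def by (rule sym)
    qed
    ultimately have "((\<lambda>t. - 2 * Ts t) \<longlongrightarrow> 1 + of_int b - of_real s - 0) (at_right 0)"
      by (rule Lim_transform_eventually)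
    hence "((\<lambda>t. - 2 * Ts t / - 2) \<longlongrightarrow> (1 + of_int b - of_real s - 0) / - 2) (at_right 0)"
      by (intro tendsto_intros) simp_all
    moreover have "(1 + of_int b - of_real s - 0) / - 2 = - (1 + of_int b - of_real s - 0) / (2::complex)"
      by (simp only: divide_minus_right minus_divide_left)
    moreover have "(\<lambda>t. - 2 * Ts t / - 2) = Ts" by (rule ext) simp
    ultimately show ?thesis by metis
  qed
  have kval: "(of_int k :: complex) = (1 + of_int a - of_real s) / 2 + (1 + of_int b - of_real s) / 2"
  proof -
    have "((\<lambda>t. T t - Ts t) \<longlongrightarrow> (1 + of_int a - of_real s - 0) / 2 - - (1 + of_int b - of_real s - 0) / 2) (at_right 0)"
      by (intro tendsto_intros LT LTs)
    moreover have "eventually (\<lambda>t. T t - Ts t = of_real t * deriv (\<lambda>z. g z - gs z) (of_real t) / (g (of_real t) - gs (of_real t))) (at_right 0)"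
      using evpos
    proof eventually_elim
      case (elim t)
      note t0 = conjunct1[OF elim(1)] conjunct2[OF elim(1)]
      have tO: "complex_of_real t \<in> Op" using t0 by (simp add: Op_def)
      have "deriv (\<lambda>z. g z - gs z) (of_real t) = deriv g (of_real t) - deriv gs (of_real t)"
        by (rule deriv_diff) (use tO gh gsh oO holomorphic_on_imp_differentiable_at in blast)+
      thus ?case unfolding T_def Ts_def by (simp only: right_diff_distrib diff_divide_distrib)
    qed
    ultimately have "((\<lambda>t::real. of_real t * deriv (\<lambda>z. g z - gs z) (of_real t) / (g (of_real t) - gs (of_real t)))
        \<longlongrightarrow> (1 + of_int a - of_real s - 0) / 2 - - (1 + of_int b - of_real s - 0) / 2) (at_right 0)"
      by (rule Lim_transform_eventually)
    from tendsto_unique[OF _ L3 this] show ?thesis by (simp add: field_simps)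
  qed
  define OT where "OT = (\<lambda>t::real. om (of_real (ln t)) * th (of_real (ln t)))"
  define Lc where "Lc = (1 + of_int a - of_real s) / 2 * ((1 + of_int b - of_real s) / 2 :: complex)"
  have LOT: "(OT \<longlongrightarrow> Lc) (at_right 0)"
  proof -
    have "((\<lambda>t. - (T t * Ts t)) \<longlongrightarrow> - ((1 + of_int a - of_real s - 0) / 2 * (- (1 + of_int b - of_real s - 0) / 2))) (at_right 0)"
      by (intro tendsto_intros LT LTs)
    moreover have "eventually (\<lambda>t. - (T t * Ts t) = OT t) (at_right 0)"
      using evpos ev_dlt
    proof eventually_elim
      case (elim t)
      note t0 = conjunct1[OF elim(1)] conjunct2[OF elim(1)]
      from key(3)[OF tS[OF t0(1) t0(2)]] show ?case
        unfolding texp[OF t0(1) t0(2)] T_def Ts_def OT_def using elim(2)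
        by (simp add: field_simps power2_eq_square)
    qed
    ultimately have "(OT \<longlongrightarrow> - ((1 + of_int a - of_real s - 0) / 2 * (- (1 + of_int b - of_real s - 0) / 2))) (at_right 0)"
      by (rule Lim_transform_eventually)
    moreover have "- ((1 + of_int a - of_real s - 0) / 2 * (- (1 + of_int b - of_real s - 0) / 2)) = Lc"
      unfolding Lc_def by (simp add: field_simps)
    ultimately show ?thesis by simp
  qed
  define Mf where "Mf = (\<lambda>t::real. c * c' * (\<phi> (of_real t) * \<psi> (of_real t)))"
  have LM: "(Mf \<longlongrightarrow> c * c' * (\<phi> 0 * \<psi> 0)) (at_right 0)"
  proof -
    have c2: "isCont \<phi> 0"
      using phol b0r holomorphic_on_imp_continuous_on continuous_on_eq_continuous_at open_ball by blast
    have c3: "isCont \<psi> 0"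
      using pshol b0r holomorphic_on_imp_continuous_on continuous_on_eq_continuous_at open_ball by blast
    have "((\<lambda>z. c * c' * (\<phi> z * \<psi> z)) \<longlongrightarrow> c * c' * (\<phi> 0 * \<psi> 0)) (at 0)"
      using c2 c3 by (intro tendsto_intros) (auto simp: isCont_def)
    thus ?thesis unfolding Mf_def by (rule tendsto_at0_to_right)
  qed
  have M0: "c * c' * (\<phi> 0 * \<psi> 0) \<noteq> 0" using c0 c'0 phnz psnz b0r by auto
  have OTrep: "eventually (\<lambda>t. OT t = of_real (t powr (2 * s)) * Mf t) (at_right 0)"
    using evpos
  proof eventually_elim
    case (elim t)
    note t0 = conjunct1[OF elim(1)] conjunct2[OF elim(1)]
    have wr: "Re (complex_of_real (ln t)) < ln r" using t0 \<rho> by (simp add: less_le_trans[OF _ lnr])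
    have e: "exp (complex_of_real s * complex_of_real (ln t)) = of_real (t powr s)"
      using t0 by (simp add: powr_def flip: of_real_mult exp_of_real)
    have "t powr (2 * s) = t powr s * t powr s" by (simp flip: powr_add)
    thus ?case unfolding OT_def Mf_def using omr thr wr texp[OF t0] e
      by (simp add: algebra_simps)
  qed
  have s0: "s = 0"
  proof (rule ccontr)
    assume "s \<noteq> 0" hence sneg: "s < 0" using sle by simp
    have "((\<lambda>t::real. t powr (- 2 * s)) \<longlongrightarrow> 0) (at_right 0)"
      by (rule tendsto_zero_powrI) (use sneg in \<open>auto intro!: tendsto_ident_at simp: eventually_at_right_less eventually_mono[OF eventually_at_right_less]\<close>)
    hence "((\<lambda>t. OT t * of_real (t powr (- 2 * s))) \<longlongrightarrow> Lc * of_real 0) (at_right 0)"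
      by (intro tendsto_intros LOT)
    moreover have "eventually (\<lambda>t. OT t * of_real (t powr (- 2 * s)) = Mf t) (at_right 0)"
      using OTrep evpos
    proof eventually_elim
      case (elim t)
      have "t powr (2 * s) * t powr (- 2 * s) = 1" using elim by (simp flip: powr_add)
      hence "(of_real (t powr (2 * s)) :: complex) * of_real (t powr (- 2 * s)) = 1" by (simp flip: of_real_mult)
      thus ?case using elim(1) by (simp add: algebra_simps)
    qed
    ultimately have "(Mf \<longlongrightarrow> Lc * of_real 0) (at_right 0)" by (rule Lim_transform_eventually)
    from tendsto_unique[OF _ LM this] M0 show False by simp
  qed
  have "(OT \<longlongrightarrow> c * c' * (\<phi> 0 * \<psi> 0)) (at_right 0)"
  proof (rule Lim_transform_eventually[OF LM])
    show "eventually (\<lambda>t. Mf t = OT t) (at_right 0)"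
      using OTrep evpos by eventually_elim (simp add: s0)
  qed
  from tendsto_unique[OF _ this LOT] have MLc: "c * c' * (\<phi> 0 * \<psi> 0) = Lc" by simp
  have "of_int (4 * k) = (of_int (4 + 2 * a + 2 * b) :: complex)" using kval s0 by (simp add: field_simps)
  hence "4 * k = 4 + 2 * a + 2 * b" by (simp only: of_int_eq_iff)
  hence "2 * k = 2 + a + b" by simp
  hence pos: "(1 + a) * (1 + b) > 0" using order_sign[of F Fs] unfolding a_def b_def k_def by simp
  define q where "q = real_of_int ((1 + a) * (1 + b)) / 4"
  have "real_of_int ((1 + a) * (1 + b)) > 0" using pos by (simp only: of_int_pos)
  hence "q > 0" by (simp add: q_def)
  moreover have "c * c' * \<phi> 0 * \<psi> 0 = of_real q"
    using MLc s0 unfolding Lc_def q_def by (simp add: field_simps)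
  ultimately show ?thesis using s0 by blast
qed


theorem corollary1p18:
  fixes E :: "complex \<Rightarrow> complex^2^2" and om th :: "complex \<Rightarrow> complex"
  assumes "flat_front E om th"
    and "regular_WCF_end E om th"
    and "cylindrical om th"
  shows "(\<exists>q::real. q > 0 \<and> ((\<lambda>z. z\<^sup>2 * hopf_coeff om th z) \<longlongrightarrow> complex_of_real q) (at 0))
         \<and> has_ord0 (metric_coeff om) (-1) \<and> has_ord0 (metric_coeff th) (-1)"
proof -
  note ff = assms(1)
  have reg: "regular_end E" and comp: "complete_at_0 om th"
    using assms(2) unfolding regular_WCF_end_def WCF_end_def by auto
  obtain \<mu> where o1: "has_ord0 (metric_coeff om) \<mu>" and o2: "has_ord0 (metric_coeff th) \<mu>"
    using assms(3) unfolding cylindrical_def by blast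
  obtain r1 \<phi> where r1: "r1 > 0" and ph: "\<phi> holomorphic_on ball 0 r1" "\<phi> 0 \<noteq> 0"
    and eq1: "\<forall>z\<in>ball 0 r1 - {0}. metric_coeff om z = cmod z powr (2 * \<mu>) * (cmod (\<phi> z))\<^sup>2"
    using o1 unfolding has_ord0_def by blast
  obtain r2 \<psi> where r2: "r2 > 0" and ps: "\<psi> holomorphic_on ball 0 r2" "\<psi> 0 \<noteq> 0"
    and eq2: "\<forall>z\<in>ball 0 r2 - {0}. metric_coeff th z = cmod z powr (2 * \<mu>) * (cmod (\<psi> z))\<^sup>2"
    using o2 unfolding has_ord0_def by blast
  have "isCont \<phi> 0"
    using ph(1) r1 holomorphic_on_imp_continuous_on continuous_on_eq_continuous_at open_ball
    by (metis centre_in_ball)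
  then obtain d1 where d1: "d1 > 0" "\<And>y. dist 0 y < d1 \<Longrightarrow> \<phi> y \<noteq> 0"
    using continuous_at_avoid[of 0 \<phi> 0] ph(2) by blast
  have "isCont \<psi> 0"
    using ps(1) r2 holomorphic_on_imp_continuous_on continuous_on_eq_continuous_at open_ball
    by (metis centre_in_ball)
  then obtain d2 where d2: "d2 > 0" "\<And>y. dist 0 y < d2 \<Longrightarrow> \<psi> y \<noteq> 0"
    using continuous_at_avoid[of 0 \<psi> 0] ps(2) by blast
  define r where "r = Min {r1, r2, d1, d2, 1}"
  have r: "0 < r" "r \<le> 1" "r \<le> r1" "r \<le> r2" "r \<le> d1" "r \<le> d2"
    using r1 r2 d1 d2 by (auto simp: r_def)
  have sub1: "ball (0::complex) r \<subseteq> ball 0 r1" and sub2: "ball (0::complex) r \<subseteq> ball 0 r2"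
    using r by auto
  have phr: "\<phi> holomorphic_on ball 0 r" using holomorphic_on_subset[OF ph(1) sub1] .
  have psr: "\<psi> holomorphic_on ball 0 r" using holomorphic_on_subset[OF ps(1) sub2] .
  have phnz: "\<forall>z\<in>ball 0 r. \<phi> z \<noteq> 0" using d1 r by auto
  have psnz: "\<forall>z\<in>ball 0 r. \<psi> z \<noteq> 0" using d2 r by auto
  have eq1r: "\<forall>z\<in>ball 0 r - {0}. metric_coeff om z = cmod z powr (2*\<mu>) * (cmod (\<phi> z))\<^sup>2"
    using eq1 sub1 by auto
  have eq2r: "\<forall>z\<in>ball 0 r - {0}. metric_coeff th z = cmod z powr (2*\<mu>) * (cmod (\<psi> z))\<^sup>2"
    using eq2 sub2 by auto
  have omh: "om holomorphic_on left_half_plane" and thh: "th holomorphic_on left_half_plane"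
    using ff unfolding flat_front_def by auto
  obtain c where c: "cmod c = 1" and omr: "\<forall>w. Re w < ln r \<longrightarrow> om w = c * exp (of_real (\<mu>+1) * w) * \<phi> (exp w)"
    using rep_from_ord0[OF omh r(1) r(2) phr phnz eq1r] by blast
  obtain c' where c': "cmod c' = 1" and thr: "\<forall>w. Re w < ln r \<longrightarrow> th w = c' * exp (of_real (\<mu>+1) * w) * \<psi> (exp w)"
    using rep_from_ord0[OF thh r(1) r(2) psr psnz eq2r] by blast
  have mule: "\<mu> \<le> -1"
    by (rule complete_imp_mu_le[OF comp r(1) r(2) holomorphic_on_imp_continuous_on[OF phr]
          holomorphic_on_imp_continuous_on[OF psr] eq1r eq2r])
  have c0: "c \<noteq> 0" and c'0: "c' \<noteq> 0" using c c' by auto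
  have core_res: "\<mu> + 1 = 0 \<and> (\<exists>q::real. q > 0 \<and> c * c' * \<phi> 0 * \<psi> 0 = of_real q)"
    by (rule core[OF ff reg r(1) r(2) phr psr phnz psnz omr thr c0 c'0]) (use mule in simp)
  then obtain q where q: "q > 0" "c * c' * \<phi> 0 * \<psi> 0 = of_real q" and mu: "\<mu> = -1" by auto
  have lim: "((\<lambda>z. z\<^sup>2 * hopf_coeff om th z) \<longlongrightarrow> complex_of_real q) (at 0)"
  proof -
    have b0: "(0::complex) \<in> ball 0 r" using r by simp
    have "isCont \<phi> 0" using phr b0 holomorphic_on_imp_continuous_on continuous_on_eq_continuous_at open_ball by blast
    moreover have "isCont \<psi> 0" using psr b0 holomorphic_on_imp_continuous_on continuous_on_eq_continuous_at open_ball by blast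
    ultimately have "((\<lambda>z. c * c' * \<phi> z * \<psi> z) \<longlongrightarrow> c * c' * \<phi> 0 * \<psi> 0) (at 0)"
      by (intro tendsto_intros) (auto simp: isCont_def)
    moreover have "eventually (\<lambda>z. c * c' * \<phi> z * \<psi> z = z\<^sup>2 * hopf_coeff om th z) (at 0)"
    proof -
      have "eventually (\<lambda>z. z \<in> ball 0 r \<and> z \<noteq> 0) (at (0::complex))"
        using eventually_at_ball'[OF r(1), of 0 UNIV] by (auto elim: eventually_mono)
      thus ?thesis
      proof eventually_elim
        case (elim z)
        have "ln (cmod z) < ln r" using elim r(1) by (subst ln_less_cancel_iff) auto
        hence Re: "Re (Ln z) < ln r" using elim by (simp add: Re_Ln)
        have ez: "exp (Ln z) = z" using elim by simp
        have "z\<^sup>2 * hopf_coeff om th z = om (Ln z) * th (Ln z)"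
          using elim by (simp add: hopf_coeff_def)
        also have "\<dots> = c * c' * \<phi> z * \<psi> z"
          using omr thr Re ez mu by simp
        finally show ?case by simp
      qed
    qed
    ultimately show ?thesis using q(2) by (simp add: Lim_transform_eventually)
  qed
  show ?thesis using q lim o1 o2 mu by auto
qed

end
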